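(* Let $P\in\mathcal X$ be positive definite and let $Z_n$, $n=1,2,\dots$, be a sequence of traceless Hermitian matrices in $\mathbb H^d$ such that $F(P,Z_n)$ is constant in $n$. Then the eigenvalues $\{z_{k,n}\}_{k=1,\dots,d}$ of $Z_n$ are uniformly bounded: $\sup_{k,n}|z_{k,n}|<\infty$.
   Context: Single player: $d\ge1$, $\mathbb H^d$ is the real vector space of $d\times d$ complex Hermitian matrices; $\mathcal X=\{X\in\mathbb H^d:X\succeq0,\operatorname{tr}X=1\}$. For Hermitian $A=\sum_k\lambda_kv_kv_k^\dagger$, $f(A)=\sum_kf(\lambda_k)v_kv_k^\dagger$. Regularizer $h(X)=\operatorname{tr}\theta(X)$ with $\theta:[0,1]\to\mathbb R$ continuous, twice differentiable on $(0,1]$, $\theta(0)=0$, $\inf_{(0,1]}\theta''>0$. Mirror map $Q(Y)=\arg\max_{X\in\mathcal X}\{\operatorname{tr}(YX)-h(X)\}$. Convex conjugate $h^*(Y)=\max_{X\in\mathcal X}\{\operatorname{tr}(YX)-h(X)\}$. Fenchel coupling $F(P,Y)=h(P)+h^*(Y)-\operatorname{tr}(PY)$ for $P\in\mathcal X$, $Y\in\mathbb H^d$. *)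

theory Defs
  imports "HOL-Analysis.Analysis"
begin

text \<open>d x d complex matrices are represented as complex^'n^'n with 'n a finite type,
  d = CARD('n) (so d \<ge> 1 automatically).\<close>

type_synonym 'n cmat = "complex^'n^'n"

definition ctrace :: "'n::finite cmat \<Rightarrow> complex" where
  "ctrace A = (\<Sum>i\<in>UNIV. A $ i $ i)"

definition cadj :: "'n::finite cmat \<Rightarrow> 'n cmat" where
  "cadj A = (\<chi> i j. cnj (A $ j $ i))"

definition hermitian :: "'n::finite cmat \<Rightarrow> bool" where
  "hermitian A \<longleftrightarrow> cadj A = A"

definition unitary :: "'n::finite cmat \<Rightarrow> bool" where
  "unitary U \<longleftrightarrow> U ** cadj U = mat 1 \<and> cadj U ** U = mat 1"

definition rdiag :: "('n::finite \<Rightarrow> real) \<Rightarrow> 'n cmat" where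
  "rdiag l = (\<chi> i j. if i = j then complex_of_real (l i) else 0)"

definition cquad :: "'n::finite cmat \<Rightarrow> complex^'n \<Rightarrow> complex" where
  "cquad A x = (\<Sum>i\<in>UNIV. \<Sum>j\<in>UNIV. cnj (x $ i) * A $ i $ j * x $ j)"

definition psd :: "'n::finite cmat \<Rightarrow> bool" where
  "psd A \<longleftrightarrow> hermitian A \<and> (\<forall>x. 0 \<le> Re (cquad A x))"

definition pos_def :: "'n::finite cmat \<Rightarrow> bool" where
  "pos_def A \<longleftrightarrow> hermitian A \<and> (\<forall>x. x \<noteq> 0 \<longrightarrow> 0 < Re (cquad A x))"

text \<open>Matrix function f(A) = \<Sum>_k f(\<lambda>_k) v_k v_k^\<dagger> via a unitary diagonalisation
  A = U diag(\<lambda>) U^\<dagger> (independent of the chosen diagonalisation).\<close>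
definition matfun :: "(real \<Rightarrow> real) \<Rightarrow> 'n::finite cmat \<Rightarrow> 'n cmat" where
  "matfun f A = (SOME B. \<exists>U l. unitary U \<and> A = U ** rdiag l ** cadj U
                          \<and> B = U ** rdiag (f \<circ> l) ** cadj U)"

definition spectraplex :: "'n::finite cmat set" where
  "spectraplex = {X. psd X \<and> ctrace X = 1}"

text \<open>Regularizer h(X) = tr \<theta>(X) (real since \<theta>(X) is Hermitian).\<close>
definition hreg :: "(real \<Rightarrow> real) \<Rightarrow> 'n::finite cmat \<Rightarrow> real" where
  "hreg \<theta> X = Re (ctrace (matfun \<theta> X))"

text \<open>Convex conjugate h*(Y) = max_{X\<in>\<X>} {tr(YX) - h(X)} (the max exists; written as SUP).\<close>
definition hconj :: "(real \<Rightarrow> real) \<Rightarrow> 'n::finite cmat \<Rightarrow> real" where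
  "hconj \<theta> Y = (SUP X\<in>spectraplex. Re (ctrace (Y ** X)) - hreg \<theta> X)"

definition fenchel :: "(real \<Rightarrow> real) \<Rightarrow> 'n::finite cmat \<Rightarrow> 'n cmat \<Rightarrow> real" where
  "fenchel \<theta> P Y = hreg \<theta> P + hconj \<theta> Y - Re (ctrace (P ** Y))"

definition admissible_theta :: "(real \<Rightarrow> real) \<Rightarrow> bool" where
  "admissible_theta \<theta> \<longleftrightarrow>
     continuous_on {0..1} \<theta> \<and> \<theta> 0 = 0 \<and>
     (\<exists>\<theta>' \<theta>''. (\<forall>x\<in>{0<..1}. (\<theta> has_real_derivative \<theta>' x) (at x within {0<..1})
                            \<and> (\<theta>' has_real_derivative \<theta>'' x) (at x within {0<..1}))
              \<and> (INF x\<in>{0<..1}. \<theta>'' x) > 0)"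

end

theory Submission
  imports Defs
begin

definition cinner :: "complex^'n::finite \<Rightarrow> complex^'n \<Rightarrow> complex" where
  "cinner x y = (\<Sum>i\<in>UNIV. cnj (x $ i) * y $ i)"

lemma cinner_add_right: "cinner x (y + z) = cinner x y + cinner x z"
  by (simp add: cinner_def distrib_left sum.distrib)
lemma cinner_add_left: "cinner (x + y) z = cinner x z + cinner y z"
  by (simp add: cinner_def distrib_right sum.distrib)
lemma cinner_diff_right: "cinner x (y - z) = cinner x y - cinner x z"
  by (simp add: cinner_def right_diff_distrib sum_subtractf)
lemma cinner_diff_left: "cinner (x - y) z = cinner x z - cinner y z"
  by (simp add: cinner_def left_diff_distrib sum_subtractf)
lemma cinner_scale_right: "cinner x (c *s y) = c * cinner x y"
  by (simp add: cinner_def sum_distrib_left ac_simps)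
lemma cinner_scale_left: "cinner (c *s x) y = cnj c * cinner x y"
  by (simp add: cinner_def sum_distrib_left ac_simps)
lemma cinner_zero_right[simp]: "cinner x 0 = 0" by (simp add: cinner_def)
lemma cinner_zero_left[simp]: "cinner 0 x = 0" by (simp add: cinner_def)

lemma cinner_cnj: "cnj (cinner x y) = cinner y x"
  by (simp add: cinner_def ac_simps)
lemma Re_cinner: "Re (cinner x y) = inner x y"
  by (simp add: cinner_def inner_vec_def inner_complex_def Re_sum algebra_simps)
lemma Im_cinner: "Im (cinner x y) = inner y (\<i> *s x)"
  by (simp add: cinner_def inner_vec_def inner_complex_def Im_sum algebra_simps)
lemma cinner_self_real: "cinner x x = of_real (norm x ^ 2)"
proof -
  have "Im (cinner x x) = 0" by (simp add: cinner_def Im_sum)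
  moreover have "Re (cinner x x) = norm x ^ 2" by (simp add: Re_cinner power2_norm_eq_inner)
  ultimately show ?thesis by (simp add: complex_eq_iff)
qed
lemma cquad_cinner: "cquad A x = cinner x (A *v x)"
  by (simp add: cquad_def cinner_def matrix_vector_mult_def sum_distrib_left ac_simps)

lemma cinner_adj: "cinner x (A *v y) = cinner (cadj A *v x) y"
proof -
  have "cinner x (A *v y) = (\<Sum>i\<in>UNIV. \<Sum>j\<in>UNIV. cnj (x$i) * A$i$j * y$j)"
    by (simp add: cinner_def matrix_vector_mult_def sum_distrib_left mult.assoc)
  also have "\<dots> = (\<Sum>j\<in>UNIV. \<Sum>i\<in>UNIV. cnj (x$i) * A$i$j * y$j)"
    by (rule sum.swap)
  also have "\<dots> = cinner (cadj A *v x) y"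
    by (simp add: cinner_def matrix_vector_mult_def cadj_def cnj_sum sum_distrib_left ac_simps)
  finally show ?thesis .
qed
lemma cadj_mult: "cadj (A ** B) = cadj B ** cadj A"
  by (simp add: cadj_def matrix_matrix_mult_def vec_eq_iff cnj_sum mult.commute)
lemma cadj_cadj[simp]: "cadj (cadj A) = A"
  by (simp add: cadj_def vec_eq_iff)
lemma ctrace_comm: "ctrace (A ** B) = ctrace (B ** A)"
proof -
  have "ctrace (A ** B) = (\<Sum>i\<in>UNIV. \<Sum>j\<in>UNIV. A$i$j * B$j$i)"
    by (simp add: ctrace_def matrix_matrix_mult_def)
  also have "\<dots> = (\<Sum>j\<in>UNIV. \<Sum>i\<in>UNIV. A$i$j * B$j$i)"
    by (rule sum.swap)
  also have "\<dots> = ctrace (B ** A)"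
    by (simp add: ctrace_def matrix_matrix_mult_def mult.commute)
  finally show ?thesis .
qed
lemma rdiag_mult: "(A ** rdiag l) $ i $ k = A $ i $ k * of_real (l k)"
  unfolding matrix_matrix_mult_def rdiag_def by (simp add: if_distrib cong: if_cong)
lemma UDU_entry: "(U ** rdiag l ** cadj U) $ j $ i = (\<Sum>k\<in>UNIV. U $ j $ k * of_real (l k) * cnj (U $ i $ k))"
  by (simp add: matrix_matrix_mult_def[of "U ** rdiag l"] rdiag_mult cadj_def)

lemma herm_cinner: "hermitian H \<Longrightarrow> cinner x (H *v y) = cinner (H *v x) y"
  by (metis cinner_adj hermitian_def)

lemma herm_quad_real: "hermitian H \<Longrightarrow> cinner x (H *v x) = of_real (Re (cinner x (H *v x)))"
proof -
  assume h: "hermitian H"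
  have "cnj (cinner x (H *v x)) = cinner x (H *v x)"
    using h by (simp add: cinner_cnj herm_cinner)
  then have "Im (cinner x (H *v x)) = 0" by (metis Reals_cnj_iff complex_is_Real_iff)
  then show ?thesis by (simp add: complex_eq_iff)
qed

lemma quad_expand:
  "cinner (x + c *s r) (H *v (x + c *s r)) = cinner x (H *v x) + c * cinner x (H *v r)
     + cnj c * cinner r (H *v x) + cnj c * c * cinner r (H *v r)"
  by (simp add: matrix_vector_right_distrib vector_scalar_commute cinner_add_left cinner_add_right
      cinner_scale_left cinner_scale_right algebra_simps)

lemma scaleR_as_s: "(c::real) *\<^sub>R (x::complex^'n) = of_real c *s x"
  by (simp add: vec_eq_iff scaleR_conv_of_real[where 'a=complex])

lemma mv_scaleR: "(H::complex^'n^'m) *v (c *\<^sub>R x) = c *\<^sub>R (H *v x)"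
  by (simp add: scaleR_as_s vector_scalar_commute)

lemma eig_exists:
  fixes H :: "complex^'n::finite^'n" and S :: "(complex^'n) set"
  assumes h: "hermitian H" and sub: "subspace S" and inv: "\<And>x. x \<in> S \<Longrightarrow> H *v x \<in> S"
    and ne: "x0 \<in> S" "x0 \<noteq> 0"
  shows "\<exists>x\<in>S. cinner x x = 1 \<and> (\<exists>l::real. H *v x = of_real l *s x)"
proof -
  define K where "K = S \<inter> sphere 0 1"
  have cK: "compact K" unfolding K_def
    by (simp add: closed_Int_compact closed_subspace sub)
  have "(1 / norm x0) *\<^sub>R x0 \<in> K"
    using ne by (simp add: K_def subspace_scale sub)
  then have neK: "K \<noteq> {}" by blast
  have coK: "continuous_on K (\<lambda>x. inner x (H *v x))"
    by (intro continuous_on_inner continuous_on_id matrix_vector_mult_linear_continuous_on)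
  obtain x where xK: "x \<in> K" and xmax: "\<And>y. y \<in> K \<Longrightarrow> inner y (H *v y) \<le> inner x (H *v x)"
    using continuous_attains_sup[OF cK neK coK] by blast
  define l where "l = inner x (H *v x)"
  have xS: "x \<in> S" and nx: "norm x = 1" using xK by (auto simp: K_def)
  have cxx: "cinner x x = 1" using nx by (simp add: cinner_self_real)
  have bound: "Re (cinner y (H *v y)) \<le> l * Re (cinner y y)" if yS: "y \<in> S" for y
  proof (cases "y = 0")
    case True then show ?thesis by simp
  next
    case False
    define a where "a = 1 / norm y"
    have "a *\<^sub>R y \<in> K" using False yS by (simp add: K_def a_def subspace_scale sub)
    then have "inner (a *\<^sub>R y) (H *v (a *\<^sub>R y)) \<le> l" using xmax l_def by blast
    then have "a * a * inner y (H *v y) \<le> l"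
      by (simp add: mv_scaleR)
    then have "a * a * inner y (H *v y) * (norm y * norm y) \<le> l * (norm y * norm y)"
      by (simp add: mult_right_mono)
    moreover have "a * a * (norm y * norm y) = 1" using False by (simp add: a_def)
    moreover have "a * a * inner y (H *v y) * (norm y * norm y) = inner y (H *v y)"
      using False by (simp add: a_def field_simps)
    ultimately have "inner y (H *v y) \<le> l * (norm y * norm y)"
      by simp
    then show ?thesis by (simp add: Re_cinner power2_norm_eq_inner[symmetric] power2_eq_square)
  qed
  define r where "r = H *v x - of_real l *s x"
  have rS: "r \<in> S" unfolding r_def
    using xS inv sub by (simp add: subspace_diff subspace_scale scaleR_as_s[symmetric])
  have qx: "cinner x (H *v x) = of_real l"
    using herm_quad_real[OF h, of x] by (simp add: l_def Re_cinner)
  have xr: "cinner x r = 0" by (simp add: r_def cinner_diff_right cinner_scale_right qx cxx)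
  have rx: "cinner r x = 0" using xr cinner_cnj by (metis complex_cnj_zero)
  have xHr: "cinner x (H *v r) = cinner r r"
  proof -
    have "H *v x = r + of_real l *s x" by (simp add: r_def)
    then show ?thesis using herm_cinner[OF h, of x r]
      by (simp add: cinner_add_left cinner_scale_left xr)
  qed
  have rHx: "cinner r (H *v x) = cinner r r"
  proof -
    have "H *v x = r + of_real l *s x" by (simp add: r_def)
    then show ?thesis by (simp add: cinner_add_right cinner_scale_right rx)
  qed
  define N where "N = Re (cinner r r)"
  define Q where "Q = Re (cinner r (H *v r))"
  have ineq: "2 * t * N \<le> t * t * (l * N - Q)" for t :: real
  proof -
    define y where "y = x + of_real t *s r"
    have yS: "y \<in> S" using xS rS sub by (simp add: y_def subspace_add subspace_scale scaleR_as_s[symmetric])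
    have e1: "Re (cinner y (H *v y)) = l + 2 * t * N + t * t * Q"
      unfolding y_def quad_expand by (simp add: qx xHr rHx N_def Q_def)
    have e2: "Re (cinner y y) = 1 + t * t * N"
      unfolding y_def by (simp add: cinner_add_left cinner_add_right cinner_scale_left cinner_scale_right cxx xr rx N_def)
    from bound[OF yS] e1 e2 have "l + 2 * t * N + t * t * Q \<le> l * (1 + t * t * N)" by simp
    then show ?thesis by (simp add: algebra_simps)
  qed
  have N0: "N \<le> 0"
  proof (rule ccontr)
    assume "\<not> N \<le> 0"
    then have Np: "N > 0" by simp
    define t where "t = N / (\<bar>l * N - Q\<bar> + 1)"
    have tp: "t > 0" using Np by (simp add: t_def)
    have "2 * t * N \<le> t * t * (l * N - Q)" by (rule ineq)
    then have "t * (2 * N) \<le> t * (t * (l * N - Q))" by (simp add: algebra_simps)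
    then have "2 * N \<le> t * (l * N - Q)" using tp
      by (simp add: mult_le_cancel_left_pos)
    also have "\<dots> \<le> t * \<bar>l * N - Q\<bar>" using tp by (simp add: mult_left_mono)
    also have "\<dots> < N" using Np
      by (simp add: t_def divide_less_eq)
    finally show False using Np by simp
  qed
  have "N = norm r ^ 2" by (simp add: N_def Re_cinner power2_norm_eq_inner)
  then have "norm r ^ 2 \<le> 0" using N0 by simp
  then have "r = 0" by simp
  then have "H *v x = of_real l *s x" by (simp add: r_def)
  then show ?thesis using xS cxx by blast
qed

lemma orth_eigs:
  fixes H :: "complex^'n::finite^'n"
  assumes h: "hermitian H"
  shows "k \<le> CARD('n) \<Longrightarrow> \<exists>v::nat\<Rightarrow>complex^'n. \<exists>l::nat\<Rightarrow>real.
          (\<forall>i<k. \<forall>j<k. cinner (v i) (v j) = (if i = j then 1 else 0)) \<and> (\<forall>i<k. H *v v i = of_real (l i) *s v i)"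
proof (induction k)
  case 0 then show ?case by auto
next
  case (Suc k)
  then obtain v l where on: "\<forall>i<k. \<forall>j<k. cinner (v i) (v j) = (if i = j then 1 else 0)"
      and ev: "\<forall>i<k. H *v v i = of_real (l i) *s v i" by auto
  define S where "S = {x. \<forall>i<k. cinner (v i) x = 0}"
  have sub: "subspace S" unfolding subspace_def S_def
    by (simp add: cinner_add_right scaleR_as_s cinner_scale_right)
  have inv: "H *v x \<in> S" if "x \<in> S" for x
  proof -
    have "cinner (v i) (H *v x) = 0" if "i < k" for i
    proof -
      have "cinner (v i) (H *v x) = cinner (H *v v i) x" using herm_cinner[OF h] by blast
      also have "\<dots> = of_real (l i) * cinner (v i) x" using ev that by (simp add: cinner_scale_left)
      finally show ?thesis using \<open>x \<in> S\<close> that by (simp add: S_def)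
    qed
    then show ?thesis by (simp add: S_def)
  qed
  define T where "T = (\<lambda>i. v i) ` {..<k} \<union> (\<lambda>i. \<i> *s v i) ` {..<k}"
  have "finite T" by (simp add: T_def)
  have "card T \<le> k + k" unfolding T_def
    by (metis card_Un_le card_image_le card_lessThan finite_lessThan add_mono order_trans)
  then have "dim T < DIM(complex^'n)" using Suc.prems dim_le_card'[OF \<open>finite T\<close>] by simp
  then obtain x where x0: "x \<noteq> 0" and xo: "\<And>y. y \<in> span T \<Longrightarrow> orthogonal x y"
    using orthogonal_to_subspace_exists by blast
  have xS: "x \<in> S"
  proof -
    have "cinner (v i) x = 0" if "i < k" for i
    proof -
      have "orthogonal x (v i)" "orthogonal x (\<i> *s v i)"
        using xo that by (auto simp: T_def intro: span_base)
      then have "Re (cinner (v i) x) = 0" "Im (cinner (v i) x) = 0"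
        by (simp_all add: Re_cinner Im_cinner orthogonal_def inner_commute)
      then show ?thesis by (simp add: complex_eq_iff)
    qed
    then show ?thesis by (simp add: S_def)
  qed
  obtain w lw where wS: "w \<in> S" and ww: "cinner w w = 1" and wev: "H *v w = of_real lw *s w"
    using eig_exists[OF h sub inv xS x0] by blast
  have wv: "cinner w (v i) = 0" if "i < k" for i
    using wS that cinner_cnj[of "v i" w] by (simp add: S_def)
  have vw: "cinner (v i) w = 0" if "i < k" for i
    using wS that by (simp add: S_def)
  show ?case
    apply (rule exI[of _ "v(k := w)"], rule exI[of _ "l(k := lw)"])
    using on ev wv vw ww wev by (auto simp: less_Suc_eq)
qed

lemma spectral:
  fixes H :: "complex^'n::finite^'n"
  assumes h: "hermitian H"
  shows "\<exists>U l. unitary U \<and> H = U ** rdiag l ** cadj U"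
proof -
  obtain v l where on: "\<forall>i<CARD('n). \<forall>j<CARD('n). cinner (v i) (v j) = (if i = j then 1 else 0)"
      and ev: "\<forall>i<CARD('n). H *v v i = of_real (l i) *s v i"
    using orth_eigs[OF h, of "CARD('n)"] by auto
  obtain hh :: "nat \<Rightarrow> 'n" where bij: "bij_betw hh {0..<CARD('n)} UNIV"
    using ex_bij_betw_nat_finite[of "UNIV :: 'n set"] by auto
  define g where "g = inv_into {0..<CARD('n)} hh"
  have gl: "g j < CARD('n)" for j
    using bij unfolding g_def by (metis atLeastLessThan_iff bij_betw_def inv_into_into UNIV_I)
  have ginj: "g j = g k \<longleftrightarrow> j = k" for j k
    using bij unfolding g_def by (metis bij_betw_inv_into_right UNIV_I)
  define U :: "complex^'n^'n" where "U = (\<chi> i j. v (g j) $ i)"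
  define l' where "l' = (\<lambda>j. l (g j))"
  have "cadj U ** U = mat 1"
  proof -
    have "(cadj U ** U) $ j $ k = (if j = k then 1 else 0)" for j k
    proof -
      have "(cadj U ** U) $ j $ k = cinner (v (g j)) (v (g k))"
        by (simp add: matrix_matrix_mult_def cadj_def U_def cinner_def)
      also have "\<dots> = (if j = k then 1 else 0)" using on gl ginj by simp
      finally show ?thesis .
    qed
    then show ?thesis by (simp add: vec_eq_iff mat_def)
  qed
  then have uni: "unitary U" unfolding unitary_def using matrix_left_right_inverse by blast
  have HU: "H ** U = U ** rdiag l'"
  proof -
    have "(H ** U) $ i $ k = (U ** rdiag l') $ i $ k" for i k
    proof -
      have "(H ** U) $ i $ k = (H *v v (g k)) $ i"
        by (simp add: matrix_matrix_mult_def matrix_vector_mult_def U_def)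
      also have "\<dots> = of_real (l (g k)) * v (g k) $ i" using ev gl by simp
      finally show ?thesis by (simp add: rdiag_mult U_def l'_def mult.commute)
    qed
    then show ?thesis by (simp add: vec_eq_iff)
  qed
  have "H = H ** (U ** cadj U)" using uni by (simp add: unitary_def)
  also have "\<dots> = U ** rdiag l' ** cadj U" by (metis HU matrix_mul_assoc)
  finally show ?thesis using uni by blast
qed

lemma adjU_col: "unitary U \<Longrightarrow> cadj U *v column k U = axis k 1"
proof -
  assume u: "unitary U"
  have "(cadj U *v column k U) $ j = (cadj U ** U) $ j $ k" for j
    by (simp add: matrix_vector_mult_def matrix_matrix_mult_def column_def)
  then show ?thesis using u by (simp add: unitary_def vec_eq_iff mat_def axis_def)
qed

lemma U_axis: "U *v axis k 1 = column k U"
  by (simp add: vec_eq_iff matrix_vector_mult_def column_def axis_def if_distrib cong: if_cong)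

lemma rdiag_mv: "(rdiag l *v y) $ j = of_real (l j) * y $ j"
proof -
  have "(rdiag l *v y) $ j = (\<Sum>ja\<in>UNIV. (if j = ja then of_real (l j) else 0) * y $ ja)"
    by (simp add: matrix_vector_mult_def rdiag_def cong: if_cong)
  also have "\<dots> = (\<Sum>ja\<in>UNIV. if j = ja then of_real (l j) * y$ja else 0)"
    by (rule sum.cong) auto
  finally show ?thesis by simp
qed

lemma rdiag_axis: "rdiag l *v axis k 1 = of_real (l k) *s axis k 1"
  by (simp add: vec_eq_iff rdiag_mv axis_def)

lemma unitary_col: "unitary U \<Longrightarrow> cinner (column j U) (column k U) = (if j = k then 1 else 0)"
proof -
  assume u: "unitary U"
  have "cinner (column j U) (column k U) = (cadj U ** U) $ j $ k"
    by (simp add: cinner_def matrix_matrix_mult_def column_def cadj_def)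
  then show ?thesis using u by (simp add: unitary_def mat_def)
qed

lemma eigen_col: "unitary U \<Longrightarrow> (U ** rdiag l ** cadj U) *v column k U = of_real (l k) *s column k U"
proof -
  assume u: "unitary U"
  have "(U ** rdiag l ** cadj U) *v column k U = U *v (rdiag l *v (cadj U *v column k U))"
    by (simp add: matrix_vector_mul_assoc matrix_mul_assoc)
  also have "\<dots> = U *v (of_real (l k) *s axis k 1)" using u by (simp add: adjU_col rdiag_axis)
  also have "\<dots> = of_real (l k) *s column k U" by (simp add: vector_scalar_commute U_axis)
  finally show ?thesis .
qed

lemma quad_col: "unitary U \<Longrightarrow> cquad (U ** rdiag l ** cadj U) (column k U) = of_real (l k)"
  by (simp add: cquad_cinner eigen_col cinner_scale_right unitary_col)

lemma trace_UDU_A: "ctrace (A ** (U ** rdiag l ** cadj U)) = (\<Sum>k\<in>UNIV. of_real (l k) * cquad A (column k U))"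
proof -
  have "ctrace (A ** (U ** rdiag l ** cadj U)) = (\<Sum>i\<in>UNIV. \<Sum>j\<in>UNIV. A$i$j * (\<Sum>k\<in>UNIV. U $ j $ k * of_real (l k) * cnj (U $ i $ k)))"
    by (simp add: ctrace_def matrix_matrix_mult_def[of A] UDU_entry)
  also have "\<dots> = (\<Sum>i\<in>UNIV. \<Sum>j\<in>UNIV. \<Sum>k\<in>UNIV. of_real (l k) * (cnj (U $ i $ k) * A$i$j * U $ j $ k))"
    by (simp add: sum_distrib_left ac_simps)
  also have "\<dots> = (\<Sum>i\<in>UNIV. \<Sum>k\<in>UNIV. \<Sum>j\<in>UNIV. of_real (l k) * (cnj (U $ i $ k) * A$i$j * U $ j $ k))"
    by (rule sum.cong[OF refl], rule sum.swap)
  also have "\<dots> = (\<Sum>k\<in>UNIV. \<Sum>i\<in>UNIV. \<Sum>j\<in>UNIV. of_real (l k) * (cnj (U $ i $ k) * A$i$j * U $ j $ k))"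
    by (rule sum.swap)
  also have "\<dots> = (\<Sum>k\<in>UNIV. of_real (l k) * cquad A (column k U))"
    by (simp add: cquad_def column_def sum_distrib_left)
  finally show ?thesis .
qed

lemma cquad_id: "cquad (mat 1) x = cinner x x"
  by (simp add: cquad_cinner)

lemma trace_UDU: "unitary U \<Longrightarrow> ctrace (U ** rdiag l ** cadj U) = of_real (\<Sum>k\<in>UNIV. l k)"
  using trace_UDU_A[of "mat 1" U l] by (simp add: cquad_id unitary_col)

lemma cmod_sq: "cmod z * cmod z = Re z * Re z + Im z * Im z"
  by (metis cmod_power2 power2_eq_square)

lemma quad_lower:
  assumes u: "unitary V" and q: "\<And>j. p \<le> q j" and uu: "cinner x x = 1"
  shows "p \<le> Re (cquad (V ** rdiag q ** cadj V) x)"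
proof -
  define y where "y = cadj V *v x"
  have "cquad (V ** rdiag q ** cadj V) x = cinner x (V *v (rdiag q *v y))"
    by (simp add: cquad_cinner y_def matrix_vector_mul_assoc[symmetric])
  also have "\<dots> = cinner y (rdiag q *v y)" by (simp add: cinner_adj y_def)
  finally have e: "Re (cquad (V ** rdiag q ** cadj V) x) = (\<Sum>j\<in>UNIV. q j * (cmod (y $ j))^2)"
    by (simp add: cinner_def rdiag_mv Re_sum cmod_sq algebra_simps power2_eq_square)
  have yy: "cinner y y = 1"
  proof -
    have "cinner y y = cinner x (V *v (cadj V *v x))" by (simp add: y_def cinner_adj)
    also have "\<dots> = cinner x x" using u by (simp add: matrix_vector_mul_assoc unitary_def)
    finally show ?thesis using uu by simp
  qed
  have "(\<Sum>j\<in>UNIV. (cmod (y $ j))^2) = Re (cinner y y)"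
    by (simp add: cinner_def Re_sum cmod_sq algebra_simps power2_eq_square)
  then have s1: "(\<Sum>j\<in>UNIV. (cmod (y $ j))^2) = 1" using yy by simp
  have "p = (\<Sum>j\<in>UNIV. p * (cmod (y $ j))^2)" by (simp add: sum_distrib_left[symmetric] s1)
  also have "\<dots> \<le> (\<Sum>j\<in>UNIV. q j * (cmod (y $ j))^2)"
    by (rule sum_mono) (simp add: mult_right_mono q)
  finally show ?thesis using e by simp
qed

lemma eigval_diag:
  assumes u: "unitary W" and ev: "(W ** rdiag l ** cadj W) *v v = z *s v" and v0: "v \<noteq> 0"
  shows "\<exists>j. z = of_real (l j)"
proof -
  define y where "y = cadj W *v v"
  have "W *v y = v" using u by (simp add: y_def matrix_vector_mul_assoc unitary_def)
  then have y0: "y \<noteq> 0" using v0 by auto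
  then obtain j where yj: "y $ j \<noteq> 0" by (auto simp: vec_eq_iff)
  have "cadj W ** (W ** rdiag l ** cadj W) = rdiag l ** cadj W"
    using u by (simp add: unitary_def matrix_mul_assoc)
  then have "rdiag l *v y = z *s y"
    using arg_cong[OF ev, of "\<lambda>x. cadj W *v x"]
    by (simp add: y_def matrix_vector_mul_assoc vector_scalar_commute)
  then have "of_real (l j) * y $ j = z * y $ j" by (metis rdiag_mv vector_smult_component)
  then show ?thesis using yj by auto
qed

definition rank1 :: "complex^'n::finite \<Rightarrow> complex^'n^'n" where
  "rank1 u = (\<chi> i j. u $ i * cnj (u $ j))"

lemma rank1_herm: "hermitian (rank1 u)"
  by (simp add: hermitian_def cadj_def rank1_def vec_eq_iff mult.commute)

lemma rank1_quad: "cquad (rank1 u) x = cnj (cinner u x) * cinner u x"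
  by (simp add: cquad_def rank1_def cinner_def cnj_sum sum_distrib_left sum_distrib_right ac_simps) (rule sum.swap)

lemma rank1_psd: "psd (rank1 u)"
  by (simp add: psd_def rank1_herm rank1_quad)

lemma rank1_trace: "ctrace (rank1 u) = cinner u u"
  by (simp add: ctrace_def rank1_def cinner_def mult.commute)

lemma rank1_spec: "cinner u u = 1 \<Longrightarrow> rank1 u \<in> spectraplex"
  by (simp add: spectraplex_def rank1_psd rank1_trace)

lemma trace_rank1: "ctrace (Y ** rank1 u) = cquad Y u"
  by (simp add: ctrace_def matrix_matrix_mult_def rank1_def cquad_def sum_distrib_left ac_simps)

lemma theta_bdd: "admissible_theta \<theta> \<Longrightarrow> \<exists>M. \<forall>x\<in>{0..1}. \<bar>\<theta> x\<bar> \<le> M"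
proof -
  assume "admissible_theta \<theta>"
  then have "continuous_on {0..1} \<theta>" by (simp add: admissible_theta_def)
  then have "compact (\<theta> ` {0..1})" by (intro compact_continuous_image) auto
  then have "bounded (\<theta> ` {0..1})" by (rule compact_imp_bounded)
  then show ?thesis by (auto simp: bounded_iff)
qed

lemma spec_decomp:
  assumes X: "X \<in> spectraplex"
  shows "\<exists>U l. unitary U \<and> X = U ** rdiag l ** cadj U \<and> hreg \<theta> X = (\<Sum>k\<in>UNIV. \<theta> (l k))
           \<and> (\<forall>k. 0 \<le> l k \<and> l k \<le> 1) \<and> (\<Sum>k\<in>UNIV. l k) = 1"
proof -
  have ps: "psd X" and tr: "ctrace X = 1" using X by (auto simp: spectraplex_def)
  then have h: "hermitian X" by (simp add: psd_def)
  have "\<exists>B. \<exists>U l. unitary U \<and> X = U ** rdiag l ** cadj U \<and> B = U ** rdiag (\<theta> \<circ> l) ** cadj U"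
    using spectral[OF h] by blast
  then have "\<exists>U l. unitary U \<and> X = U ** rdiag l ** cadj U \<and> matfun \<theta> X = U ** rdiag (\<theta> \<circ> l) ** cadj U"
    unfolding matfun_def by (rule someI_ex)
  then obtain U l where u: "unitary U" and Xe: "X = U ** rdiag l ** cadj U"
    and me: "matfun \<theta> X = U ** rdiag (\<theta> \<circ> l) ** cadj U" by blast
  have hr: "hreg \<theta> X = (\<Sum>k\<in>UNIV. \<theta> (l k))"
    by (simp add: hreg_def me trace_UDU[OF u])
  have l0: "0 \<le> l k" for k
  proof -
    have "0 \<le> Re (cquad X (column k U))" using ps by (simp add: psd_def)
    then show ?thesis using quad_col[OF u, of l k] Xe by simp
  qed
  have ls: "(\<Sum>k\<in>UNIV. l k) = 1"
    using trace_UDU[OF u, of l] Xe tr of_real_eq_1_iff by metis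
  have "l k \<le> 1" for k
    using member_le_sum[of k UNIV l] l0 ls by simp
  then show ?thesis using u Xe hr l0 ls by blast
qed

lemma hreg_bound:
  assumes X: "X \<in> spectraplex" and M: "\<forall>x\<in>{0..1}. \<bar>\<theta> x\<bar> \<le> M"
  shows "\<bar>hreg \<theta> (X::complex^'n::finite^'n)\<bar> \<le> real CARD('n) * M"
proof -
  obtain U l where "unitary U" "X = U ** rdiag l ** cadj U" and hr: "hreg \<theta> X = (\<Sum>k\<in>UNIV. \<theta> (l k))" 
      and lb: "\<forall>k. 0 \<le> l k \<and> l k \<le> 1" and "(\<Sum>k\<in>UNIV. l k) = 1"
    using spec_decomp[OF X, of \<theta>] by blast
  have "\<bar>hreg \<theta> X\<bar> \<le> (\<Sum>k\<in>UNIV. \<bar>\<theta> (l k)\<bar>)" unfolding hr by (rule sum_abs)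
  also have "\<dots> \<le> (\<Sum>k\<in>(UNIV::'n set). M)" using M lb by (intro sum_mono) auto
  finally show ?thesis by simp
qed

lemma quad_bound:
  assumes uu: "cinner u u = 1"
  shows "cmod (cquad Y u) \<le> (\<Sum>i\<in>UNIV. \<Sum>j\<in>UNIV. cmod (Y $ i $ j))"
proof -
  have "norm u ^ 2 = 1" using uu Re_cinner[of u u] by (simp add: power2_norm_eq_inner)
  then have nu: "norm u = 1" by (smt (verit) norm_ge_zero power2_eq_1_iff)
  have ui: "cmod (u $ i) \<le> 1" for i using Finite_Cartesian_Product.norm_nth_le[of u i] nu by simp
  have "cmod (cquad Y u) \<le> (\<Sum>i\<in>UNIV. cmod (\<Sum>j\<in>UNIV. cnj (u $ i) * Y $ i $ j * u $ j))"
    unfolding cquad_def by (rule norm_sum)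
  also have "\<dots> \<le> (\<Sum>i\<in>UNIV. \<Sum>j\<in>UNIV. cmod (cnj (u $ i) * Y $ i $ j * u $ j))"
    by (intro sum_mono norm_sum)
  also have "\<dots> \<le> (\<Sum>i\<in>UNIV. \<Sum>j\<in>UNIV. cmod (Y $ i $ j))"
  proof (intro sum_mono)
    fix i j
    have "cmod (cnj (u $ i) * Y $ i $ j * u $ j) = cmod (u $ i) * cmod (Y $ i $ j) * cmod (u $ j)"
      by (simp add: norm_mult)
    also have "\<dots> \<le> 1 * cmod (Y $ i $ j) * 1"
      using ui by (intro mult_mono) auto
    finally show "cmod (cnj (u $ i) * Y $ i $ j * u $ j) \<le> cmod (Y $ i $ j)" by simp
  qed
  finally show ?thesis .
qed

lemma trace_bound:
  assumes X: "X \<in> spectraplex"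
  shows "Re (ctrace (Y ** X)) \<le> (\<Sum>i\<in>UNIV. \<Sum>j\<in>UNIV. cmod (Y $ i $ j))"
proof -
  define cY where "cY = (\<Sum>i\<in>UNIV. \<Sum>j\<in>UNIV. cmod (Y $ i $ j))"
  obtain U l where u: "unitary U" and Xe: "X = U ** rdiag l ** cadj U"
     and lb: "\<forall>k. 0 \<le> l k \<and> l k \<le> 1" and ls: "(\<Sum>k\<in>UNIV. l k) = 1"
    using spec_decomp[OF X, of "\<lambda>x. x"] by blast
  have "Re (ctrace (Y ** X)) = (\<Sum>k\<in>UNIV. l k * Re (cquad Y (column k U)))"
    by (simp add: Xe trace_UDU_A Re_sum)
  also have "\<dots> \<le> (\<Sum>k\<in>UNIV. l k * cY)"
  proof (intro sum_mono mult_left_mono)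
    fix k
    have "Re (cquad Y (column k U)) \<le> cmod (cquad Y (column k U))" by (rule complex_Re_le_cmod)
    also have "\<dots> \<le> cY" unfolding cY_def by (rule quad_bound) (simp add: unitary_col u)
    finally show "Re (cquad Y (column k U)) \<le> cY" .
    show "0 \<le> l k" using lb by simp
  qed
  also have "\<dots> = cY" by (simp add: sum_distrib_right[symmetric] ls)
  finally show ?thesis by (simp add: cY_def)
qed

lemma hconj_lower:
  assumes adm: "admissible_theta \<theta>" and X: "X \<in> spectraplex"
  shows "Re (ctrace (Y ** X)) - hreg \<theta> X \<le> hconj \<theta> Y"
proof -
  obtain M where M: "\<forall>x\<in>{0..1}. \<bar>\<theta> x\<bar> \<le> M" using theta_bdd[OF adm] by blast
  have "bdd_above ((\<lambda>X. Re (ctrace (Y ** X)) - hreg \<theta> X) ` spectraplex)"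
  proof (rule bdd_aboveI2)
    fix X :: "complex^'a^'a" assume X: "X \<in> spectraplex"
    have "Re (ctrace (Y ** X)) \<le> (\<Sum>i\<in>UNIV. \<Sum>j\<in>UNIV. cmod (Y $ i $ j))" by (rule trace_bound[OF X])
    moreover have "\<bar>hreg \<theta> X\<bar> \<le> real CARD('a) * M" by (rule hreg_bound[OF X M])
    ultimately show "Re (ctrace (Y ** X)) - hreg \<theta> X \<le> (\<Sum>i\<in>UNIV. \<Sum>j\<in>UNIV. cmod (Y $ i $ j)) + real CARD('a) * M"
      by linarith
  qed
  then show ?thesis unfolding hconj_def by (rule cSUP_upper[OF X])
qed

theorem lemmaE2:
  fixes \<theta> :: "real \<Rightarrow> real" and P :: "complex^'n::finite^'n" and Z :: "nat \<Rightarrow> complex^'n^'n"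
  assumes "admissible_theta \<theta>"
    and "P \<in> spectraplex" and "pos_def P"
    and "\<And>n. n \<ge> 1 \<Longrightarrow> hermitian (Z n) \<and> ctrace (Z n) = 0"
    and "\<And>n m. n \<ge> 1 \<Longrightarrow> m \<ge> 1 \<Longrightarrow> fenchel \<theta> P (Z n) = fenchel \<theta> P (Z m)"
  shows "\<exists>B::real. \<forall>n\<ge>1. \<forall>(z::complex) v. v \<noteq> 0 \<and> Z n *v v = z *s v \<longrightarrow> cmod z \<le> B"
proof -
  note adm = assms(1) and PX = assms(2) and Ppd = assms(3) and Zh = assms(4) and fc = assms(5)
  define d where "d = real CARD('n)"
  have d1: "1 \<le> d" by (simp add: d_def)
  obtain M where M: "\<forall>x\<in>{0..1}. \<bar>\<theta> x\<bar> \<le> M" using theta_bdd[OF adm] by blast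
  have Ph: "hermitian P" using Ppd by (simp add: pos_def_def)
  obtain V q where uV: "unitary V" and Pe: "P = V ** rdiag q ** cadj V" using spectral[OF Ph] by blast
  have qpos: "0 < q j" for j
  proof -
    have "cinner (column j V) (column j V) = 1" using unitary_col[OF uV] by simp
    then have "column j V \<noteq> 0" by auto
    then have "0 < Re (cquad P (column j V))" using Ppd by (simp add: pos_def_def)
    then show ?thesis using quad_col[OF uV, of q j] Pe by simp
  qed
  define pmin where "pmin = Min (range q)"
  have pmin_in: "pmin \<in> range q" unfolding pmin_def by (rule Min_in) auto
  have pmin_pos: "0 < pmin" using pmin_in qpos by auto
  have pmin_le: "pmin \<le> q j" for j unfolding pmin_def by (rule Min_le) auto
  define C where "C = fenchel \<theta> P (Z 1) - hreg \<theta> P + d * M"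
  define K where "K = C / (pmin * d)"
  have bnd: "\<bar>zz k\<bar> \<le> d * \<bar>K\<bar>" if n1: "n \<ge> 1" and uW: "unitary W" and Ze: "Z n = W ** rdiag zz ** cadj W"
    for n W zz k
  proof -
    have "ctrace (Z n) = 0" using Zh[OF n1] by simp
    then have "of_real (\<Sum>k\<in>UNIV. zz k) = (0::complex)" using trace_UDU[OF uW, of zz] Ze by simp
    then have sz: "(\<Sum>k\<in>UNIV. zz k) = 0" by (simp only: of_real_eq_0_iff)
    define zmax where "zmax = Max (range zz)"
    have zle: "zz j \<le> zmax" for j unfolding zmax_def by (rule Max_ge) auto
    have "zmax \<in> range zz" unfolding zmax_def by (rule Max_in) auto
    then obtain km where km: "zz km = zmax" by auto
    define w where "w = column km W"
    have ww: "cinner w w = 1" using unitary_col[OF uW] by (simp add: w_def)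
    have "Re (ctrace (Z n ** rank1 w)) - hreg \<theta> (rank1 w) \<le> hconj \<theta> (Z n)"
      by (rule hconj_lower[OF adm rank1_spec[OF ww]])
    moreover have "Re (ctrace (Z n ** rank1 w)) = zmax"
      using quad_col[OF uW, of zz km] km by (simp add: trace_rank1 Ze w_def)
    moreover have "hreg \<theta> (rank1 w) \<le> d * M"
      using hreg_bound[OF rank1_spec[OF ww] M] by (simp add: d_def)
    ultimately have hc: "zmax - d * M \<le> hconj \<theta> (Z n)" by linarith
    have "fenchel \<theta> P (Z n) = fenchel \<theta> P (Z 1)" using fc[OF n1] by simp
    then have fe: "hreg \<theta> P + hconj \<theta> (Z n) - Re (ctrace (P ** Z n)) = fenchel \<theta> P (Z 1)"
      by (simp add: fenchel_def)
    define pk where "pk k = Re (cquad P (column k W))" for k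
    have trPZ: "Re (ctrace (P ** Z n)) = (\<Sum>k\<in>UNIV. zz k * pk k)"
      by (simp add: Ze trace_UDU_A Re_sum pk_def)
    have pkl: "pmin \<le> pk k" for k
      unfolding pk_def Pe using quad_lower[OF uV pmin_le] unitary_col[OF uW] by simp
    have id1: "W ** rdiag (\<lambda>_. 1) ** cadj W = mat 1"
    proof -
      have "rdiag (\<lambda>_. 1) = (mat 1 :: complex^'n^'n)" by (simp add: rdiag_def mat_def vec_eq_iff)
      then show ?thesis using uW by (simp add: unitary_def)
    qed
    have "ctrace P = (\<Sum>k\<in>UNIV. of_real 1 * cquad P (column k W))"
      using trace_UDU_A[of P W "\<lambda>_. 1"] by (simp add: id1)
    then have "(\<Sum>k\<in>UNIV. cquad P (column k W)) = 1"
      using PX by (simp add: spectraplex_def)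
    then have "Re (\<Sum>k\<in>UNIV. cquad P (column k W)) = 1" by simp
    then have spk: "(\<Sum>k\<in>UNIV. pk k) = 1"
      by (simp add: pk_def Re_sum)
    have "zmax - (\<Sum>k\<in>UNIV. zz k * pk k) = (\<Sum>k\<in>UNIV. (zmax - zz k) * pk k)"
      by (simp add: left_diff_distrib sum_subtractf sum_distrib_left[symmetric] spk)
    also have "\<dots> \<ge> (\<Sum>k\<in>UNIV. (zmax - zz k) * pmin)"
      using zle pkl by (intro sum_mono mult_left_mono) auto
    finally have "(\<Sum>k\<in>UNIV. (zmax - zz k) * pmin) \<le> zmax - (\<Sum>k\<in>UNIV. zz k * pk k)" .
    moreover have "(\<Sum>k\<in>UNIV. (zmax - zz k) * pmin) = pmin * d * zmax"
      by (simp add: left_diff_distrib sum_subtractf sum_distrib_right[symmetric] sz d_def)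
    ultimately have "pmin * d * zmax \<le> C"
      using hc fe trPZ by (simp add: C_def)
    then have zK: "zmax \<le> K" unfolding K_def using pmin_pos d1
      by (simp add: pos_le_divide_eq mult.commute mult.left_commute)
    have "(\<Sum>j\<in>UNIV. zmax - zz j) = d * zmax" by (simp add: sum_subtractf sz d_def)
    moreover have "zmax - zz k \<le> (\<Sum>j\<in>UNIV. zmax - zz j)"
      using zle by (intro member_le_sum) auto
    ultimately have zlow: "(1 - d) * zmax \<le> zz k" by (simp add: algebra_simps)
    have "(1 - d) * K \<le> (1 - d) * zmax" using zK d1 by (intro mult_left_mono_neg) auto
    moreover have "(d - 1) * K \<le> (d - 1) * \<bar>K\<bar>" using d1 by (intro mult_left_mono) auto
    moreover have "\<bar>K\<bar> \<le> d * \<bar>K\<bar>" using d1 by (simp add: mult_le_cancel_right1)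
    moreover have "zz k \<le> K" using zle zK order_trans by blast
    ultimately show ?thesis using zlow by (simp add: algebra_simps abs_le_iff)
  qed
  show ?thesis
  proof (intro exI allI impI)
    fix n :: nat and z :: complex and v
    assume n1: "1 \<le> n" and ev: "v \<noteq> 0 \<and> Z n *v v = z *s v"
    have "hermitian (Z n)" using Zh[OF n1] by simp
    then obtain W zz where uW: "unitary W" and Ze: "Z n = W ** rdiag zz ** cadj W"
      using spectral by blast
    obtain j where "z = of_real (zz j)" using eigval_diag[OF uW, of zz v z] ev Ze by auto
    then show "cmod z \<le> d * \<bar>K\<bar>" using bnd[OF n1 uW Ze, of j] by simp
  qed
qed

end
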